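(* Let $\mathcal L$ be a recurrent language. Then $\mathcal L$ is eventually dendric if and only if $\mathcal L$ satisfies RBC.
   Context: $\mathcal{A}$ finite alphabet, $\mathcal{A}^*$ nonempty finite words. A language is a set $\mathcal L\subseteq\mathcal A^*$ with $\mathcal A\subseteq\mathcal L$, closed under subwords, and such that each $w\in\mathcal L$ has $a,b\in\mathcal A$ with $awb\in\mathcal L$. $\mathcal L$ is recurrent if for all $u,v\in\mathcal L$ there is $w\in\mathcal L$ with $uwv\in\mathcal L$. $Ex^\ell(w)=\{a: aw\in\mathcal L\}$, $Ex^r(w)=\{b: wb\in\mathcal L\}$, $Ex^{\ell r}(w)=\{(a,b): awb\in\mathcal L\}$. The extension graph $\mathscr E(w)$ is the bipartite graph whose vertex set is the disjoint union of $Ex^\ell(w)$ and $Ex^r(w)$, with an edge between $a$ and $b$ iff $(a,b)\in Ex^{\ell r}(w)$. $\mathcal L$ is eventually dendric if there is $n_0$ such that $\mathscr E(w)$ is a tree for all $w\in\mathcal L$ with $|w|\ge n_0$. Left special: $|Ex^\ell(w)|\ge2$; right special: $|Ex^r(w)|\ge2$; bispecial: both. A bispecial $w$ is regular bispecial if there is exactly one $\hat a\in Ex^\ell(w)$ with $\hat aw$ right special and exactly one $\hat b\in Ex^r(w)$ with $w\hat b$ left special. RBC: there is $n_0$ such that every bispecial word of length $\ge n_0$ is regular bispecial. *)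

theory Defs
  imports Main
begin

definition factor :: "'a list \<Rightarrow> 'a list \<Rightarrow> bool" where
  "factor u w \<longleftrightarrow> (\<exists>p s. w = p @ u @ s)"

definition is_language :: "'a set \<Rightarrow> 'a list set \<Rightarrow> bool" where
  "is_language A L \<longleftrightarrow>
     finite A \<and>
     (\<forall>w\<in>L. w \<noteq> [] \<and> set w \<subseteq> A) \<and>
     (\<forall>a\<in>A. [a] \<in> L) \<and>
     (\<forall>w\<in>L. \<forall>u. u \<noteq> [] \<and> factor u w \<longrightarrow> u \<in> L) \<and>
     (\<forall>w\<in>L. \<exists>a\<in>A. \<exists>b\<in>A. [a] @ w @ [b] \<in> L)"

definition recurrent :: "'a list set \<Rightarrow> bool" where
  "recurrent L \<longleftrightarrow> (\<forall>u\<in>L. \<forall>v\<in>L. \<exists>w\<in>L. u @ w @ v \<in> L)"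

definition Ex_l :: "'a set \<Rightarrow> 'a list set \<Rightarrow> 'a list \<Rightarrow> 'a set" where
  "Ex_l A L w = {a\<in>A. [a] @ w \<in> L}"

definition Ex_r :: "'a set \<Rightarrow> 'a list set \<Rightarrow> 'a list \<Rightarrow> 'a set" where
  "Ex_r A L w = {b\<in>A. w @ [b] \<in> L}"

definition Ex_lr :: "'a set \<Rightarrow> 'a list set \<Rightarrow> 'a list \<Rightarrow> ('a \<times> 'a) set" where
  "Ex_lr A L w = {(a,b). a\<in>A \<and> b\<in>A \<and> [a] @ w @ [b] \<in> L}"

definition graph_connected :: "'v set \<Rightarrow> ('v \<Rightarrow> 'v \<Rightarrow> bool) \<Rightarrow> bool" where
  "graph_connected V E \<longleftrightarrow>
     (\<forall>x\<in>V. \<forall>y\<in>V. (\<lambda>u v. u \<in> V \<and> v \<in> V \<and> (E u v \<or> E v u))\<^sup>*\<^sup>* x y)"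

text \<open>A tree: a nonempty connected graph without cycles; acyclicity is expressed as:
  every edge is a bridge (removing it disconnects its endpoints).\<close>
definition graph_tree :: "'v set \<Rightarrow> ('v \<Rightarrow> 'v \<Rightarrow> bool) \<Rightarrow> bool" where
  "graph_tree V E \<longleftrightarrow>
     V \<noteq> {} \<and> graph_connected V E \<and>
     (\<forall>x\<in>V. \<forall>y\<in>V. E x y \<longrightarrow>
        \<not> (\<lambda>u v. u \<in> V \<and> v \<in> V \<and> ((E u v \<or> E v u) \<and> {u,v} \<noteq> {x,y}))\<^sup>*\<^sup>* x y)"

definition ext_vertices :: "'a set \<Rightarrow> 'a list set \<Rightarrow> 'a list \<Rightarrow> ('a + 'a) set" where
  "ext_vertices A L w = Inl ` Ex_l A L w \<union> Inr ` Ex_r A L w"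

fun ext_edge :: "'a set \<Rightarrow> 'a list set \<Rightarrow> 'a list \<Rightarrow> 'a + 'a \<Rightarrow> 'a + 'a \<Rightarrow> bool" where
  "ext_edge A L w (Inl a) (Inr b) = ((a,b) \<in> Ex_lr A L w)"
| "ext_edge A L w _ _ = False"

definition eventually_dendric :: "'a set \<Rightarrow> 'a list set \<Rightarrow> bool" where
  "eventually_dendric A L \<longleftrightarrow>
     (\<exists>n0. \<forall>w\<in>L. length w \<ge> n0 \<longrightarrow> graph_tree (ext_vertices A L w) (ext_edge A L w))"

definition left_special :: "'a set \<Rightarrow> 'a list set \<Rightarrow> 'a list \<Rightarrow> bool" where
  "left_special A L w \<longleftrightarrow> card (Ex_l A L w) \<ge> 2"

definition right_special :: "'a set \<Rightarrow> 'a list set \<Rightarrow> 'a list \<Rightarrow> bool" where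
  "right_special A L w \<longleftrightarrow> card (Ex_r A L w) \<ge> 2"

definition bispecial :: "'a set \<Rightarrow> 'a list set \<Rightarrow> 'a list \<Rightarrow> bool" where
  "bispecial A L w \<longleftrightarrow> left_special A L w \<and> right_special A L w"

definition regular_bispecial :: "'a set \<Rightarrow> 'a list set \<Rightarrow> 'a list \<Rightarrow> bool" where
  "regular_bispecial A L w \<longleftrightarrow> bispecial A L w \<and>
     (\<exists>!a. a \<in> Ex_l A L w \<and> right_special A L ([a] @ w)) \<and>
     (\<exists>!b. b \<in> Ex_r A L w \<and> left_special A L (w @ [b]))"

definition RBC :: "'a set \<Rightarrow> 'a list set \<Rightarrow> bool" where
  "RBC A L \<longleftrightarrow>
     (\<exists>n0. \<forall>w\<in>L. length w \<ge> n0 \<and> bispecial A L w \<longrightarrow> regular_bispecial A L w)"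

end

theory Submission
  imports Defs
begin



definition gr :: "'v set \<Rightarrow> ('v \<Rightarrow> 'v \<Rightarrow> bool) \<Rightarrow> 'v set set \<Rightarrow> 'v \<Rightarrow> 'v \<Rightarrow> bool" where
  "gr V E F = (\<lambda>u v. u \<in> V \<and> v \<in> V \<and> (E u v \<or> E v u) \<and> {u,v} \<notin> F)"

lemma gr_sym: "gr V E F x y \<Longrightarrow> gr V E F y x"
  unfolding gr_def by (auto simp: insert_commute)

lemma gr_rtr_sym: "(gr V E F)\<^sup>*\<^sup>* x y \<Longrightarrow> (gr V E F)\<^sup>*\<^sup>* y x"
proof (induction rule: rtranclp_induct)
  case base then show ?case by simp
next
  case (step y z)
  then show ?case using gr_sym[OF step(2)] by (meson converse_rtranclp_into_rtranclp)
qed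

lemma gr_mono: "F \<subseteq> F' \<Longrightarrow> (gr V E F')\<^sup>*\<^sup>* x y \<Longrightarrow> (gr V E F)\<^sup>*\<^sup>* x y"
  by (erule rtranclp_mono[THEN predicate2D, rotated]) (auto simp: gr_def)

lemma conn_gr: "graph_connected V E \<longleftrightarrow> (\<forall>x\<in>V. \<forall>y\<in>V. (gr V E {})\<^sup>*\<^sup>* x y)"
  unfolding graph_connected_def gr_def by simp

lemma tree_gr: "graph_tree V E \<longleftrightarrow> V \<noteq> {} \<and> graph_connected V E \<and>
   (\<forall>x\<in>V. \<forall>y\<in>V. E x y \<longrightarrow> \<not> (gr V E {{x,y}})\<^sup>*\<^sup>* x y)"
  unfolding graph_tree_def gr_def by (simp add: conj_assoc)

lemma split_lemma:
  assumes "graph_connected V E" "x \<in> V" "y \<in> V" "E x y" "z \<in> V"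
  shows "(gr V E {{x,y}})\<^sup>*\<^sup>* x z \<or> (gr V E {{x,y}})\<^sup>*\<^sup>* y z"
proof -
  have "(gr V E {})\<^sup>*\<^sup>* x z" using assms conn_gr by metis
  then show ?thesis
  proof (induction rule: rtranclp_induct)
    case base then show ?case by simp
  next
    case (step z z')
    show ?case
    proof (cases "{z,z'} = {x,y}")
      case True
      then have "z' = x \<or> z' = y" by (auto simp: doubleton_eq_iff)
      then show ?thesis by auto
    next
      case False
      then have "gr V E {{x,y}} z z'" using step(2) by (auto simp: gr_def)
      then show ?thesis using step(3) by (meson rtranclp.rtrancl_into_rtrancl)
    qed
  qed
qed

lemma avoid_lemma:
  assumes "(gr V E F)\<^sup>*\<^sup>* r z" "\<not> (gr V E F)\<^sup>*\<^sup>* r v" "v \<in> e"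
  shows "(gr V E (insert e F))\<^sup>*\<^sup>* r z"
  using assms(1)
proof (induction rule: rtranclp_induct)
  case base then show ?case by simp
next
  case (step z z')
  have "{z,z'} \<noteq> e"
  proof
    assume "{z,z'} = e"
    then have "v = z \<or> v = z'" using assms(3) by auto
    then show False using step(1,2) assms(2) by (meson rtranclp.rtrancl_into_rtrancl)
  qed
  then have "gr V E (insert e F) z z'" using step(2) by (auto simp: gr_def)
  then show ?case using step(3) by (meson rtranclp.rtrancl_into_rtrancl)
qed

lemma tree_card:
  assumes fin: "finite V" and tr: "graph_tree V E" and anti: "\<And>x y. E x y \<Longrightarrow> \<not> E y x"
  shows "card {(x,y). x \<in> V \<and> y \<in> V \<and> E x y} + 1 \<le> card V"
proof -
  define P where "P = {(x,y). x \<in> V \<and> y \<in> V \<and> E x y}"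
  have ne: "V \<noteq> {}" and con: "graph_connected V E"
    and br: "\<And>x y. x \<in> V \<Longrightarrow> y \<in> V \<Longrightarrow> E x y \<Longrightarrow> \<not> (gr V E {{x,y}})\<^sup>*\<^sup>* x y"
    using tr tree_gr by metis+
  obtain r where r: "r \<in> V" using ne by auto
  define f where "f = (\<lambda>(x,y). if (gr V E {{x,y}})\<^sup>*\<^sup>* r x then y else x)"
  define oth where "oth = (\<lambda>(x,y). if (gr V E {{x,y}})\<^sup>*\<^sup>* r x then x else y)"
  have key: "\<not> (gr V E {{x,y}})\<^sup>*\<^sup>* r (f (x,y)) \<and> (gr V E {{x,y}})\<^sup>*\<^sup>* r (oth (x,y))
      \<and> {f (x,y), oth (x,y)} = {x,y}" if "(x,y) \<in> P" for x y
  proof -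
    have xy: "x \<in> V" "y \<in> V" "E x y" using that P_def by auto
    have nb: "\<not> (gr V E {{x,y}})\<^sup>*\<^sup>* x y" using br xy by blast
    have "(gr V E {{x,y}})\<^sup>*\<^sup>* x r \<or> (gr V E {{x,y}})\<^sup>*\<^sup>* y r"
      using split_lemma[OF con xy r] .
    then have rr: "(gr V E {{x,y}})\<^sup>*\<^sup>* r x \<or> (gr V E {{x,y}})\<^sup>*\<^sup>* r y"
      using gr_rtr_sym by metis
    show ?thesis
    proof (cases "(gr V E {{x,y}})\<^sup>*\<^sup>* r x")
      case True
      have "\<not> (gr V E {{x,y}})\<^sup>*\<^sup>* r y"
        using True nb gr_rtr_sym by (metis rtranclp_trans)
      then show ?thesis using True by (simp add: f_def oth_def insert_commute)
    next
      case False
      then show ?thesis using rr by (simp add: f_def oth_def insert_commute)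
    qed
  qed
  have inj: "inj_on f P"
  proof (rule inj_onI)
    fix p q assume p: "p \<in> P" and q: "q \<in> P" and fe: "f p = f q"
    obtain x1 y1 where p1: "p = (x1,y1)" by fastforce
    obtain x2 y2 where q1: "q = (x2,y2)" by fastforce
    show "p = q"
    proof (rule ccontr)
      assume ne: "p \<noteq> q"
      have E1: "E x1 y1" "x1 \<in> V" "y1 \<in> V" using p p1 P_def by auto
      have E2: "E x2 y2" using q q1 P_def by auto
      have dif: "{x1,y1} \<noteq> {x2,y2}"
      proof
        assume "{x1,y1} = {x2,y2}"
        then have "(x1 = x2 \<and> y1 = y2) \<or> (x1 = y2 \<and> y1 = x2)" by (auto simp: doubleton_eq_iff)
        then show False using ne p1 q1 anti E1 E2 by blast
      qed
      define v where "v = f p"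
      define u1 where "u1 = oth p"
      have k1: "\<not> (gr V E {{x1,y1}})\<^sup>*\<^sup>* r v" "(gr V E {{x1,y1}})\<^sup>*\<^sup>* r u1" "{v,u1} = {x1,y1}"
        using key[of x1 y1] p p1 v_def u1_def by auto
      have k2: "\<not> (gr V E {{x2,y2}})\<^sup>*\<^sup>* r v" "v \<in> {x2,y2}"
        using key[of x2 y2] q q1 v_def fe by auto
      have "(gr V E (insert {x2,y2} {{x1,y1}}))\<^sup>*\<^sup>* r u1"
        using avoid_lemma[OF k1(2) k1(1) k2(2)] .
      then have a: "(gr V E {{x2,y2}})\<^sup>*\<^sup>* r u1" by (rule gr_mono[rotated]) auto
      have "gr V E {{x2,y2}} u1 v"
        using k1(3) E1 dif unfolding gr_def by (auto simp: doubleton_eq_iff)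
      then have "(gr V E {{x2,y2}})\<^sup>*\<^sup>* r v" using a by (meson rtranclp.rtrancl_into_rtrancl)
      then show False using k2 by blast
    qed
  qed
  have sub: "f ` P \<subseteq> V - {r}"
  proof
    fix z assume "z \<in> f ` P"
    then obtain x y where xy: "(x,y) \<in> P" "z = f (x,y)" by auto
    have "z \<in> {x,y}" using key[OF xy(1)] xy(2) by auto
    moreover have "z \<noteq> r" using key[OF xy(1)] xy(2) by auto
    ultimately show "z \<in> V - {r}" using xy(1) P_def by auto
  qed
  have "card P = card (f ` P)" using inj by (simp add: card_image)
  also have "\<dots> \<le> card (V - {r})" using sub fin by (simp add: card_mono)
  also have "\<dots> = card V - 1" using r fin by simp
  finally have "card P \<le> card V - 1" .
  moreover have "card V \<ge> 1" using r fin by (metis One_nat_def Suc_leI card_gt_0_iff empty_iff)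
  ultimately show ?thesis unfolding P_def by linarith
qed




locale lang =
  fixes A :: "'a set" and L :: "'a list set"
  assumes isl: "is_language A L"
begin

lemma finA: "finite A" using isl unfolding is_language_def by (elim conjE)
lemma L_ne: "w \<in> L \<Longrightarrow> w \<noteq> []" using isl unfolding is_language_def by (elim conjE) blast
lemma L_set: "w \<in> L \<Longrightarrow> set w \<subseteq> A" using isl unfolding is_language_def by (elim conjE) blast
lemma L_fac0: "\<forall>w\<in>L. \<forall>u. u \<noteq> [] \<and> factor u w \<longrightarrow> u \<in> L"
  by (rule isl[unfolded is_language_def, THEN conjunct2, THEN conjunct2, THEN conjunct2, THEN conjunct1])
lemma L_fac: "p @ u @ s \<in> L \<Longrightarrow> u \<noteq> [] \<Longrightarrow> u \<in> L"
  using L_fac0 unfolding factor_def by blast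
lemma L_ext0: "\<forall>w\<in>L. \<exists>a\<in>A. \<exists>b\<in>A. [a] @ w @ [b] \<in> L"
  by (rule isl[unfolded is_language_def, THEN conjunct2, THEN conjunct2, THEN conjunct2, THEN conjunct2])
lemma L_ext: "w \<in> L \<Longrightarrow> \<exists>a\<in>A. \<exists>b\<in>A. a # w @ [b] \<in> L"
  using L_ext0 by auto

lemma L_pre: "u @ s \<in> L \<Longrightarrow> u \<noteq> [] \<Longrightarrow> u \<in> L" using L_fac[of "[]" u s] by simp
lemma L_suf: "p @ u \<in> L \<Longrightarrow> u \<noteq> [] \<Longrightarrow> u \<in> L" using L_fac[of p u "[]"] by simp

lemma Exl_simp: "Ex_l A L w = {a\<in>A. a # w \<in> L}" by (simp add: Ex_l_def)
lemma Exr_simp: "Ex_r A L w = {b\<in>A. w @ [b] \<in> L}" by (simp add: Ex_r_def)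
lemma Exlr_simp: "Ex_lr A L w = {(a,b). a\<in>A \<and> b\<in>A \<and> a # w @ [b] \<in> L}" by (simp add: Ex_lr_def)

lemma fin_Exl: "finite (Ex_l A L w)" using finA by (simp add: Exl_simp)
lemma fin_Exr: "finite (Ex_r A L w)" using finA by (simp add: Exr_simp)
lemma fin_Exlr: "finite (Ex_lr A L w)"
proof -
  have "Ex_lr A L w \<subseteq> A \<times> A" by (auto simp: Exlr_simp)
  then show ?thesis using finA finite_subset by blast
qed

lemma Exl_ne: assumes "w \<in> L" shows "Ex_l A L w \<noteq> {}"
proof -
  obtain a b where ab: "a \<in> A" "a # w @ [b] \<in> L" using L_ext[OF assms] by blast
  then have "a # w \<in> L" using L_pre[of "a # w" "[b]"] by simp
  then show ?thesis using ab by (auto simp: Exl_simp)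
qed
lemma Exr_ne: assumes "w \<in> L" shows "Ex_r A L w \<noteq> {}"
proof -
  obtain a b where ab: "b \<in> A" "a # w @ [b] \<in> L" using L_ext[OF assms] by blast
  then have "w @ [b] \<in> L" using L_suf[of "[a]" "w @ [b]"] by simp
  then show ?thesis using ab by (auto simp: Exr_simp)
qed

lemma card_Exl_ge: "w \<in> L \<Longrightarrow> card (Ex_l A L w) \<ge> 1"
  using Exl_ne[of w] fin_Exl[of w] by (simp add: Suc_leI card_gt_0_iff)
lemma card_Exr_ge: "w \<in> L \<Longrightarrow> card (Ex_r A L w) \<ge> 1"
  using Exr_ne[of w] fin_Exr[of w] by (simp add: Suc_leI card_gt_0_iff)

lemma pre1: "a # w @ [b] \<in> L \<Longrightarrow> a # w \<in> L" using L_pre[of "a # w" "[b]"] by simp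
lemma suf1: "a # w @ [b] \<in> L \<Longrightarrow> w @ [b] \<in> L" using L_suf[of "[a]" "w @ [b]"] by simp

lemma Exlr_Sigma_l: "Ex_lr A L w = Sigma (Ex_l A L w) (\<lambda>a. Ex_r A L (a # w))"
  unfolding Exlr_simp Exl_simp Exr_simp by (auto dest: pre1)

lemma Exlr_Sigma_r: "Ex_lr A L w = (\<lambda>(b,a). (a,b)) ` Sigma (Ex_r A L w) (\<lambda>b. Ex_l A L (w @ [b]))"
  unfolding Exlr_simp Exl_simp Exr_simp by (force dest: suf1)

lemma card_Exlr_l: "card (Ex_lr A L w) = (\<Sum>a\<in>Ex_l A L w. card (Ex_r A L (a # w)))"
  unfolding Exlr_Sigma_l by (rule card_SigmaI) (auto simp: fin_Exl fin_Exr)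

lemma card_Exlr_r: "card (Ex_lr A L w) = (\<Sum>b\<in>Ex_r A L w. card (Ex_l A L (w @ [b])))"
proof -
  have "inj_on (\<lambda>(b,a). (a,b)) (Sigma (Ex_r A L w) (\<lambda>b. Ex_l A L (w @ [b])))"
    by (auto simp: inj_on_def)
  then have "card (Ex_lr A L w) = card (Sigma (Ex_r A L w) (\<lambda>b. Ex_l A L (w @ [b])))"
    unfolding Exlr_Sigma_r by (rule card_image)
  also have "\<dots> = (\<Sum>b\<in>Ex_r A L w. card (Ex_l A L (w @ [b])))"
    by (rule card_SigmaI) (auto simp: fin_Exl fin_Exr)
  finally show ?thesis .
qed

lemma Exr_sub: "Ex_r A L (a # w) \<subseteq> Ex_r A L w"
  unfolding Exr_simp by (auto dest: suf1)
lemma Exl_sub: "Ex_l A L (w @ [b]) \<subseteq> Ex_l A L w"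
  unfolding Exl_simp by (blast dest: pre1)

lemma Exlr_sub: "Ex_lr A L w \<subseteq> Ex_l A L w \<times> Ex_r A L w"
  unfolding Exlr_simp Exl_simp Exr_simp by (blast dest: pre1 suf1)

definition Ln :: "nat \<Rightarrow> 'a list set" where "Ln n = {w\<in>L. length w = n}"

lemma fin_Ln: "finite (Ln n)"
proof -
  have "Ln n \<subseteq> {xs. set xs \<subseteq> A \<and> length xs = n}" using L_set by (auto simp: Ln_def)
  then show ?thesis using finite_lists_length_eq[OF finA] finite_subset by blast
qed

lemma inj_l: "inj_on (\<lambda>(w,a). a # w) X" by (auto simp: inj_on_def)
lemma inj_r: "inj_on (\<lambda>(w,b). w @ [b]) X" by (auto simp: inj_on_def)

lemma Ln_Suc_l: assumes "n \<ge> 1"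
  shows "Ln (Suc n) = (\<lambda>(w,a). a # w) ` Sigma (Ln n) (\<lambda>w. Ex_l A L w)"
proof (intro set_eqI iffI)
  fix u assume u: "u \<in> Ln (Suc n)"
  then obtain a w where aw: "u = a # w" by (cases u) (auto simp: Ln_def)
  have "w \<noteq> []" using u aw assms by (auto simp: Ln_def)
  then have "w \<in> L" using u aw L_suf[of "[a]" w] by (auto simp: Ln_def)
  moreover have "a \<in> A" using u aw L_set[of u] by (auto simp: Ln_def)
  ultimately show "u \<in> (\<lambda>(w,a). a # w) ` Sigma (Ln n) (\<lambda>w. Ex_l A L w)"
    using u aw by (auto simp: Ln_def Exl_simp image_iff)
qed (auto simp: Ln_def Exl_simp)

lemma Ln_Suc_r: assumes "n \<ge> 1"
  shows "Ln (Suc n) = (\<lambda>(w,b). w @ [b]) ` Sigma (Ln n) (\<lambda>w. Ex_r A L w)"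
proof (intro set_eqI iffI)
  fix u assume u: "u \<in> Ln (Suc n)"
  then obtain b w where aw: "u = w @ [b]" by (cases u rule: rev_cases) (auto simp: Ln_def)
  have "w \<noteq> []" using u aw assms by (auto simp: Ln_def)
  then have "w \<in> L" using u aw L_pre[of w "[b]"] by (auto simp: Ln_def)
  moreover have "b \<in> A" using u aw L_set[of u] by (auto simp: Ln_def)
  ultimately show "u \<in> (\<lambda>(w,b). w @ [b]) ` Sigma (Ln n) (\<lambda>w. Ex_r A L w)"
    using u aw by (auto simp: Ln_def Exr_simp image_iff)
qed (auto simp: Ln_def Exr_simp)

lemma sum_Ln_Suc_l: assumes "n \<ge> 1"
  shows "(\<Sum>u\<in>Ln (Suc n). f u) = (\<Sum>w\<in>Ln n. \<Sum>a\<in>Ex_l A L w. f (a # w))"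
proof -
  have "(\<Sum>u\<in>Ln (Suc n). f u) = (\<Sum>p\<in>Sigma (Ln n) (\<lambda>w. Ex_l A L w). f ((\<lambda>(w,a). a # w) p))"
    unfolding Ln_Suc_l[OF assms] by (rule sum.reindex[OF inj_l, unfolded comp_def])
  also have "\<dots> = (\<Sum>w\<in>Ln n. \<Sum>a\<in>Ex_l A L w. f (a # w))"
    by (simp add: sum.Sigma fin_Ln fin_Exl split_def)
  finally show ?thesis .
qed

lemma sum_Ln_Suc_r: assumes "n \<ge> 1"
  shows "(\<Sum>u\<in>Ln (Suc n). f u) = (\<Sum>w\<in>Ln n. \<Sum>b\<in>Ex_r A L w. f (w @ [b]))"
proof -
  have "(\<Sum>u\<in>Ln (Suc n). f u) = (\<Sum>p\<in>Sigma (Ln n) (\<lambda>w. Ex_r A L w). f ((\<lambda>(w,b). w @ [b]) p))"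
    unfolding Ln_Suc_r[OF assms] by (rule sum.reindex[OF inj_r, unfolded comp_def])
  also have "\<dots> = (\<Sum>w\<in>Ln n. \<Sum>b\<in>Ex_r A L w. f (w @ [b]))"
    by (simp add: sum.Sigma fin_Ln fin_Exr split_def)
  finally show ?thesis .
qed

end



lemma ev_const:
  fixes f :: "nat \<Rightarrow> int"
  assumes dec: "\<And>n. n \<ge> N \<Longrightarrow> f (Suc n) \<le> f n" and nn: "\<And>n. n \<ge> N \<Longrightarrow> 0 \<le> f n"
  shows "\<exists>M\<ge>N. \<forall>n\<ge>M. f n = f M"
proof -
  have mono: "f (M + d) \<le> f M" if "M \<ge> N" for M d
  proof (induction d)
    case 0 then show ?case by simp
  next
    case (Suc d) then show ?case using dec[of "M + d"] that by simp
  qed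
  define k where "k = (LEAST k. \<exists>n\<ge>N. nat (f n) = k)"
  have ex: "\<exists>n\<ge>N. nat (f n) = k" unfolding k_def by (rule LeastI_ex) auto
  then obtain M where M: "M \<ge> N" "nat (f M) = k" by blast
  have "f n = f M" if "n \<ge> M" for n
  proof -
    have "k \<le> nat (f n)" unfolding k_def by (rule Least_le) (use that M in \<open>auto intro: le_trans\<close>)
    moreover have "f n \<le> f M" using mono[OF M(1), of "n - M"] that by simp
    ultimately show ?thesis using M nn[of n] nn[of M] that by linarith
  qed
  then show ?thesis using M by blast
qed

context lang begin

abbreviation "ll w \<equiv> card (Ex_l A L w)"
abbreviation "rr w \<equiv> card (Ex_r A L w)"
abbreviation "ee w \<equiv> card (Ex_lr A L w)"

definition mm :: "'a list \<Rightarrow> int" where "mm w = int (ee w) - int (ll w) - int (rr w) + 1"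
definition sR :: "nat \<Rightarrow> int" where "sR n = (\<Sum>w\<in>Ln n. int (rr w) - 1)"
definition sL :: "nat \<Rightarrow> int" where "sL n = (\<Sum>w\<in>Ln n. int (ll w) - 1)"

lemma sR_step: assumes "n \<ge> 1" shows "sR (Suc n) = sR n + (\<Sum>w\<in>Ln n. mm w)"
proof -
  have "sR (Suc n) = (\<Sum>w\<in>Ln n. \<Sum>a\<in>Ex_l A L w. int (rr (a # w)) - 1)"
    unfolding sR_def by (rule sum_Ln_Suc_l[OF assms])
  also have "\<dots> = (\<Sum>w\<in>Ln n. int (ee w) - int (ll w))"
  proof (rule sum.cong[OF refl])
    fix w
    have "(\<Sum>a\<in>Ex_l A L w. int (rr (a # w)) - 1) = int (\<Sum>a\<in>Ex_l A L w. rr (a # w)) - int (ll w)"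
      by (simp add: sum_subtractf)
    then show "(\<Sum>a\<in>Ex_l A L w. int (rr (a # w)) - 1) = int (ee w) - int (ll w)"
      by (simp add: card_Exlr_l)
  qed
  also have "\<dots> = (\<Sum>w\<in>Ln n. (int (rr w) - 1) + mm w)"
    by (rule sum.cong) (auto simp: mm_def)
  also have "\<dots> = sR n + (\<Sum>w\<in>Ln n. mm w)" by (simp add: sum.distrib sR_def)
  finally show ?thesis .
qed

lemma sL_step: assumes "n \<ge> 1" shows "sL (Suc n) = sL n + (\<Sum>w\<in>Ln n. mm w)"
proof -
  have "sL (Suc n) = (\<Sum>w\<in>Ln n. \<Sum>b\<in>Ex_r A L w. int (ll (w @ [b])) - 1)"
    unfolding sL_def by (rule sum_Ln_Suc_r[OF assms])
  also have "\<dots> = (\<Sum>w\<in>Ln n. int (ee w) - int (rr w))"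
  proof (rule sum.cong[OF refl])
    fix w
    have "(\<Sum>b\<in>Ex_r A L w. int (ll (w @ [b])) - 1) = int (\<Sum>b\<in>Ex_r A L w. ll (w @ [b])) - int (rr w)"
      by (simp add: sum_subtractf)
    then show "(\<Sum>b\<in>Ex_r A L w. int (ll (w @ [b])) - 1) = int (ee w) - int (rr w)"
      by (simp add: card_Exlr_r)
  qed
  also have "\<dots> = (\<Sum>w\<in>Ln n. (int (ll w) - 1) + mm w)"
    by (rule sum.cong) (auto simp: mm_def)
  also have "\<dots> = sL n + (\<Sum>w\<in>Ln n. mm w)" by (simp add: sum.distrib sL_def)
  finally show ?thesis .
qed

lemma sR_nonneg: "sR n \<ge> 0"
  unfolding sR_def by (rule sum_nonneg) (use card_Exr_ge in \<open>fastforce simp: Ln_def\<close>)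

lemma m_zero_eventually:
  assumes "\<And>w. w \<in> L \<Longrightarrow> length w \<ge> N0 \<Longrightarrow> mm w \<le> 0"
  shows "\<exists>N\<ge>1. \<forall>n\<ge>N. sR (Suc n) = sR n \<and> sL (Suc n) = sL n \<and> (\<forall>w\<in>Ln n. mm w = 0)"
proof -
  define N1 where "N1 = max N0 1"
  have dec: "sR (Suc n) \<le> sR n" if "n \<ge> N1" for n
  proof -
    have "(\<Sum>w\<in>Ln n. mm w) \<le> 0"
      by (rule sum_nonpos) (use assms that in \<open>auto simp: Ln_def N1_def\<close>)
    then show ?thesis using sR_step[of n] that N1_def by simp
  qed
  obtain M where M: "M \<ge> N1" "\<forall>n\<ge>M. sR n = sR M"
    using ev_const[of N1 sR, OF dec sR_nonneg] by blast
  have "sR (Suc n) = sR n \<and> sL (Suc n) = sL n \<and> (\<forall>w\<in>Ln n. mm w = 0)" if "n \<ge> M" for n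
  proof -
    have e: "sR (Suc n) = sR n" using M(2)[rule_format, of n] M(2)[rule_format, of "Suc n"] that by linarith
    have n1: "n \<ge> 1" using M that N1_def by simp
    have z: "(\<Sum>w\<in>Ln n. mm w) = 0" using e sR_step[OF n1] by simp
    have "(\<Sum>w\<in>Ln n. - mm w) = 0" using z by (simp add: sum_negf)
    moreover have nn: "\<forall>w\<in>Ln n. 0 \<le> - mm w" using assms that M(1) N1_def by (auto simp: Ln_def)
    moreover have "(\<Sum>w\<in>Ln n. - mm w) = 0 \<longleftrightarrow> (\<forall>w\<in>Ln n. - mm w = 0)"
      by (rule sum_nonneg_eq_0_iff[OF fin_Ln]) (use nn in blast)
    ultimately have "\<forall>w\<in>Ln n. - mm w = 0" by blast
    then show ?thesis using e z sL_step[OF n1] by simp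
  qed
  then show ?thesis using M(1) N1_def by (intro exI[of _ M]) auto
qed

end



context lang begin

lemma fin_extV: "finite (ext_vertices A L w)"
  unfolding ext_vertices_def using fin_Exl fin_Exr by simp

lemma card_extV: "card (ext_vertices A L w) = ll w + rr w"
proof -
  have "card (Inl ` Ex_l A L w \<union> Inr ` Ex_r A L w) = card (Inl ` Ex_l A L w :: ('a + 'a) set) + card (Inr ` Ex_r A L w :: ('a + 'a) set)"
    by (rule card_Un_disjoint) (auto simp: fin_Exl fin_Exr)
  also have "\<dots> = ll w + rr w" by (simp add: card_image)
  finally show ?thesis unfolding ext_vertices_def .
qed

lemma ext_edge_iff: "ext_edge A L w x y \<longleftrightarrow> (\<exists>a b. x = Inl a \<and> y = Inr b \<and> (a,b) \<in> Ex_lr A L w)"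
  by (cases x; cases y) auto

lemma extP: "{(x,y). x \<in> ext_vertices A L w \<and> y \<in> ext_vertices A L w \<and> ext_edge A L w x y}
   = (\<lambda>(a,b). (Inl a, Inr b)) ` Ex_lr A L w"
  using Exlr_sub[of w] unfolding ext_edge_iff ext_vertices_def by auto

lemma tree_mm:
  assumes "graph_tree (ext_vertices A L w) (ext_edge A L w)"
  shows "mm w \<le> 0"
proof -
  have "card {(x,y). x \<in> ext_vertices A L w \<and> y \<in> ext_vertices A L w \<and> ext_edge A L w x y} + 1
     \<le> card (ext_vertices A L w)"
    by (rule tree_card[OF fin_extV assms]) (auto simp: ext_edge_iff)
  moreover have "card ((\<lambda>(a,b). (Inl a, Inr b)) ` Ex_lr A L w :: (('a + 'a) \<times> ('a + 'a)) set) = ee w"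
    by (rule card_image) (auto simp: inj_on_def)
  ultimately have "ee w + 1 \<le> ll w + rr w" unfolding extP card_extV by simp
  then show ?thesis unfolding mm_def by linarith
qed

lemma dstar:
  assumes ah: "ah \<in> Ex_l A L w" and bh: "bh \<in> Ex_r A L w"
    and H: "\<And>a b. a \<in> Ex_l A L w \<Longrightarrow> b \<in> Ex_r A L w \<Longrightarrow> (a,b) \<in> Ex_lr A L w \<longleftrightarrow> (a = ah \<or> b = bh)"
  shows "graph_tree (ext_vertices A L w) (ext_edge A L w)"
proof -
  define V where "V = ext_vertices A L w"
  define E where "E = ext_edge A L w"
  have Ed: "E x y \<longleftrightarrow> (\<exists>a b. x = Inl a \<and> y = Inr b \<and> a \<in> Ex_l A L w \<and> b \<in> Ex_r A L w \<and> (a = ah \<or> b = bh))" for x y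
    unfolding E_def ext_edge_iff using H Exlr_sub[of w] by blast
  have Vd: "x \<in> V \<longleftrightarrow> (\<exists>a. x = Inl a \<and> a \<in> Ex_l A L w) \<or> (\<exists>b. x = Inr b \<and> b \<in> Ex_r A L w)" for x
    unfolding V_def ext_vertices_def by auto
  have toah: "(gr V E {})\<^sup>*\<^sup>* x (Inl ah)" if "x \<in> V" for x
  proof -
    have s1: "gr V E {} (Inr b) (Inl ah)" if "b \<in> Ex_r A L w" for b
      unfolding gr_def using that ah by (auto simp: Ed Vd)
    have s2: "gr V E {} (Inl a) (Inr bh)" if "a \<in> Ex_l A L w" for a
      unfolding gr_def using that bh by (auto simp: Ed Vd)
    show ?thesis
    proof (cases x)
      case (Inl a)
      then have a: "a \<in> Ex_l A L w" using that Vd by auto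
      show ?thesis using s2[OF a] s1[OF bh] Inl
        by (meson converse_rtranclp_into_rtranclp r_into_rtranclp)
    next
      case (Inr b)
      then have b: "b \<in> Ex_r A L w" using that Vd by auto
      show ?thesis using s1[OF b] Inr by auto
    qed
  qed
  have conn: "graph_connected V E"
    unfolding conn_gr using toah gr_rtr_sym by (meson rtranclp_trans)
  have br: "\<not> (gr V E {{x,y}})\<^sup>*\<^sup>* x y" if xy: "x \<in> V" "y \<in> V" "E x y" for x y
  proof -
    obtain a b where ab: "x = Inl a" "y = Inr b" "a \<in> Ex_l A L w" "b \<in> Ex_r A L w" "a = ah \<or> b = bh"
      using xy(3) Ed by blast
    let ?R = "gr V E {{x,y}}"
    have inv: "\<And>z. ?R\<^sup>*\<^sup>* x z \<Longrightarrow> z \<in> S" if S0: "x \<in> S" "y \<notin> S"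
      and cl: "\<And>z z'. z \<in> S \<Longrightarrow> ?R z z' \<Longrightarrow> z' \<in> S" for S
    proof -
      fix z assume "?R\<^sup>*\<^sup>* x z"
      then show "z \<in> S"
        by (induction rule: rtranclp_induct) (use S0 cl in blast)+
    qed
    show ?thesis
    proof (cases "a = ah")
      case True
      show ?thesis
      proof (cases "b = bh")
        case True
        let ?S = "{Inl ah} \<union> {Inr b' | b'. b' \<noteq> bh}"
        have "\<And>z z'. z \<in> ?S \<Longrightarrow> ?R z z' \<Longrightarrow> z' \<in> ?S"
          unfolding gr_def using ab \<open>a = ah\<close> True by (auto simp: Ed)
        then show ?thesis using inv[of ?S] ab \<open>a = ah\<close> True by auto
      next
        case False
        let ?S = "- {y}"
        have "\<And>z z'. z \<in> ?S \<Longrightarrow> ?R z z' \<Longrightarrow> z' \<in> ?S"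
          unfolding gr_def using ab \<open>a = ah\<close> False by (auto simp: Ed)
        then show ?thesis using inv[of ?S] ab by auto
      qed
    next
      case False
      let ?S = "{x}"
      have "\<And>z z'. z \<in> ?S \<Longrightarrow> ?R z z' \<Longrightarrow> z' \<in> ?S"
        unfolding gr_def using ab False by (auto simp: Ed)
      then show ?thesis using inv[of ?S] ab by auto
    qed
  qed
  have "V \<noteq> {}" using ah Vd by auto
  then show ?thesis using conn br unfolding tree_gr V_def E_def by blast
qed

end



context lang begin

lemma card1_ex: assumes "finite X" "card X \<ge> 1" "card X < 2" obtains x where "X = {x}"
proof -
  have "card X = 1" using assms(2,3) by linarith
  then obtain x where "X = {x}" by (rule card_1_singletonE)
  then show ?thesis by (rule that)
qed

lemma nonLS: assumes w: "w \<in> L" and nl: "\<not> left_special A L w"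
  shows "mm w = 0 \<and> graph_tree (ext_vertices A L w) (ext_edge A L w)"
proof -
  obtain a0 where a0: "Ex_l A L w = {a0}"
    using card1_ex[OF fin_Exl card_Exl_ge[OF w]] nl unfolding left_special_def by force
  have eq: "Ex_r A L (a0 # w) = Ex_r A L w"
  proof
    show "Ex_r A L (a0 # w) \<subseteq> Ex_r A L w" by (rule Exr_sub)
    show "Ex_r A L w \<subseteq> Ex_r A L (a0 # w)"
    proof
      fix b assume b: "b \<in> Ex_r A L w"
      then have "w @ [b] \<in> L" by (simp add: Exr_simp)
      then have "Ex_l A L (w @ [b]) \<noteq> {}" by (rule Exl_ne)
      then have "a0 \<in> Ex_l A L (w @ [b])" using Exl_sub[of w b] a0 by auto
      then show "b \<in> Ex_r A L (a0 # w)" using b by (simp add: Exl_simp Exr_simp)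
    qed
  qed
  have "ee w = rr w" unfolding card_Exlr_l a0 using eq by simp
  then have m: "mm w = 0" unfolding mm_def using a0 by simp
  obtain bh where bh: "bh \<in> Ex_r A L w" using Exr_ne[OF w] by blast
  have "graph_tree (ext_vertices A L w) (ext_edge A L w)"
  proof (rule dstar[of a0 w bh])
    show "a0 \<in> Ex_l A L w" using a0 by simp
    show "bh \<in> Ex_r A L w" by (rule bh)
    fix a b assume "a \<in> Ex_l A L w" "b \<in> Ex_r A L w"
    then show "(a,b) \<in> Ex_lr A L w \<longleftrightarrow> (a = a0 \<or> b = bh)"
      using eq a0 unfolding Exlr_Sigma_l by auto
  qed
  then show ?thesis using m by simp
qed

lemma nonRS: assumes w: "w \<in> L" and nr: "\<not> right_special A L w"
  shows "mm w = 0 \<and> graph_tree (ext_vertices A L w) (ext_edge A L w)"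
proof -
  obtain b0 where b0: "Ex_r A L w = {b0}"
    using card1_ex[OF fin_Exr card_Exr_ge[OF w]] nr unfolding right_special_def by force
  have eq: "Ex_l A L (w @ [b0]) = Ex_l A L w"
  proof
    show "Ex_l A L (w @ [b0]) \<subseteq> Ex_l A L w" by (rule Exl_sub)
    show "Ex_l A L w \<subseteq> Ex_l A L (w @ [b0])"
    proof
      fix a assume a: "a \<in> Ex_l A L w"
      then have "a # w \<in> L" by (simp add: Exl_simp)
      then have "Ex_r A L (a # w) \<noteq> {}" by (rule Exr_ne)
      then have "b0 \<in> Ex_r A L (a # w)" using Exr_sub[of a w] b0 by auto
      then show "a \<in> Ex_l A L (w @ [b0])" using a by (simp add: Exl_simp Exr_simp)
    qed
  qed
  have "ee w = ll w" unfolding card_Exlr_r b0 using eq by simp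
  then have m: "mm w = 0" unfolding mm_def using b0 by simp
  obtain ah where ah: "ah \<in> Ex_l A L w" using Exl_ne[OF w] by blast
  have "graph_tree (ext_vertices A L w) (ext_edge A L w)"
  proof (rule dstar[of ah w b0])
    show "b0 \<in> Ex_r A L w" using b0 by simp
    show "ah \<in> Ex_l A L w" by (rule ah)
    fix a b assume "a \<in> Ex_l A L w" "b \<in> Ex_r A L w"
    then show "(a,b) \<in> Ex_lr A L w \<longleftrightarrow> (a = ah \<or> b = b0)"
      using eq b0 unfolding Exlr_simp Exl_simp Exr_simp by auto
  qed
  then show ?thesis using m by simp
qed

end



context lang begin

lemma reg_bs: assumes w: "w \<in> L" and rb: "regular_bispecial A L w"
  shows "mm w \<le> 0 \<and> (mm w = 0 \<longrightarrow> graph_tree (ext_vertices A L w) (ext_edge A L w))"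
proof -
  have ex1: "\<exists>!a. a \<in> Ex_l A L w \<and> right_special A L (a # w)"
    using rb unfolding regular_bispecial_def by simp
  obtain ah where ah: "ah \<in> Ex_l A L w" "right_special A L (ah # w)"
    and ahu: "\<And>a. a \<in> Ex_l A L w \<Longrightarrow> right_special A L (a # w) \<Longrightarrow> a = ah"
    by (rule ex1E[OF ex1]) blast
  have ex2: "\<exists>!b. b \<in> Ex_r A L w \<and> left_special A L (w @ [b])"
    using rb unfolding regular_bispecial_def by simp
  obtain bh where bh: "bh \<in> Ex_r A L w" "left_special A L (w @ [bh])"
    and bhu: "\<And>b. b \<in> Ex_r A L w \<Longrightarrow> left_special A L (w @ [b]) \<Longrightarrow> b = bh"
    by (rule ex1E[OF ex2]) blast
  have r1: "rr (a # w) \<le> 1" if "a \<in> Ex_l A L w" "a \<noteq> ah" for a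
    using ahu[OF that(1)] that(2) unfolding right_special_def by fastforce
  have l1: "ll (w @ [b]) \<le> 1" if "b \<in> Ex_r A L w" "b \<noteq> bh" for b
    using bhu[OF that(1)] that(2) unfolding left_special_def by fastforce
  have rah: "rr (ah # w) \<le> rr w" by (rule card_mono[OF fin_Exr Exr_sub])
  have lbh: "ll (w @ [bh]) \<le> ll w" by (rule card_mono[OF fin_Exl Exl_sub])
  have e1: "ee w \<le> rr (ah # w) + (ll w - 1)"
  proof -
    have "ee w = rr (ah # w) + (\<Sum>a\<in>Ex_l A L w - {ah}. rr (a # w))"
      unfolding card_Exlr_l using ah(1) fin_Exl by (simp add: sum.remove)
    also have "(\<Sum>a\<in>Ex_l A L w - {ah}. rr (a # w)) \<le> (\<Sum>a\<in>Ex_l A L w - {ah}. 1)"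
      by (rule sum_mono) (use r1 in auto)
    also have "\<dots> = ll w - 1" using ah(1) fin_Exl by simp
    finally show ?thesis by simp
  qed
  have e2: "ee w \<le> ll (w @ [bh]) + (rr w - 1)"
  proof -
    have "ee w = ll (w @ [bh]) + (\<Sum>b\<in>Ex_r A L w - {bh}. ll (w @ [b]))"
      unfolding card_Exlr_r using bh(1) fin_Exr by (simp add: sum.remove)
    also have "(\<Sum>b\<in>Ex_r A L w - {bh}. ll (w @ [b])) \<le> (\<Sum>b\<in>Ex_r A L w - {bh}. 1)"
      by (rule sum_mono) (use l1 in auto)
    also have "\<dots> = rr w - 1" using bh(1) fin_Exr by simp
    finally show ?thesis by simp
  qed
  have lpos: "ll w \<ge> 1" using card_Exl_ge[OF w] .
  have rpos: "rr w \<ge> 1" using card_Exr_ge[OF w] .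
  have m: "mm w \<le> 0" unfolding mm_def using e1 rah lpos by linarith
  have "graph_tree (ext_vertices A L w) (ext_edge A L w)" if m0: "mm w = 0"
  proof -
    have "rr (ah # w) = rr w" using m0 e1 rah lpos unfolding mm_def by linarith
    then have eqr: "Ex_r A L (ah # w) = Ex_r A L w"
      using card_subset_eq[OF fin_Exr Exr_sub] by blast
    have "ll (w @ [bh]) = ll w" using m0 e2 lbh rpos unfolding mm_def by linarith
    then have eql: "Ex_l A L (w @ [bh]) = Ex_l A L w"
      using card_subset_eq[OF fin_Exl Exl_sub] by blast
    show ?thesis
    proof (rule dstar[OF ah(1) bh(1)])
      fix a b assume a: "a \<in> Ex_l A L w" and b: "b \<in> Ex_r A L w"
      show "(a,b) \<in> Ex_lr A L w \<longleftrightarrow> (a = ah \<or> b = bh)"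
      proof
        assume ab: "(a,b) \<in> Ex_lr A L w"
        show "a = ah \<or> b = bh"
        proof (rule ccontr)
          assume "\<not> (a = ah \<or> b = bh)"
          then have na: "a \<noteq> ah" and nb: "b \<noteq> bh" by auto
          have "a \<in> Ex_l A L (w @ [bh])" using eql a by simp
          then have "bh \<in> Ex_r A L (a # w)" using bh(1) by (simp add: Exl_simp Exr_simp)
          moreover have "b \<in> Ex_r A L (a # w)" using ab by (simp add: Exlr_simp Exr_simp)
          moreover have "rr (a # w) \<le> 1" using r1[OF a na] .
          ultimately have "b = bh" using fin_Exr card_le_Suc0_iff_eq by (metis One_nat_def)
          then show False using nb by simp
        qed
      next
        assume "a = ah \<or> b = bh"
        then show "(a,b) \<in> Ex_lr A L w"
        proof
          assume "a = ah"
          then show ?thesis using b eqr unfolding Exlr_Sigma_l using a by auto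
        next
          assume "b = bh"
          then have "a \<in> Ex_l A L (w @ [b])" using eql a by simp
          then show ?thesis using b a by (simp add: Exlr_simp Exl_simp Exr_simp)
        qed
      qed
    qed
  qed
  then show ?thesis using m by blast
qed

lemma RBC_imp_dendric: assumes "RBC A L" shows "eventually_dendric A L"
proof -
  obtain n0 where n0: "\<And>w. w \<in> L \<Longrightarrow> length w \<ge> n0 \<Longrightarrow> bispecial A L w \<Longrightarrow> regular_bispecial A L w"
    using assms unfolding RBC_def by blast
  have all: "mm w \<le> 0 \<and> (mm w = 0 \<longrightarrow> graph_tree (ext_vertices A L w) (ext_edge A L w))"
    if "w \<in> L" "length w \<ge> n0" for w
  proof (cases "bispecial A L w")
    case True
    then show ?thesis using reg_bs[OF that(1) n0[OF that True]] by blast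
  next
    case False
    then show ?thesis using nonLS[OF that(1)] nonRS[OF that(1)] unfolding bispecial_def by auto
  qed
  obtain N where N: "\<forall>n\<ge>N. sR (Suc n) = sR n \<and> sL (Suc n) = sL n \<and> (\<forall>w\<in>Ln n. mm w = 0)"
    using m_zero_eventually[of n0] all by blast
  have "graph_tree (ext_vertices A L w) (ext_edge A L w)" if "w \<in> L" "length w \<ge> max N n0" for w
  proof -
    have "mm w = 0" using N that by (auto simp: Ln_def)
    then show ?thesis using all[OF that(1)] that(2) by auto
  qed
  then show ?thesis unfolding eventually_dendric_def by blast
qed

end



context lang begin

definition RSn :: "nat \<Rightarrow> 'a list set" where "RSn n = {w\<in>Ln n. right_special A L w}"
definition LSn :: "nat \<Rightarrow> 'a list set" where "LSn n = {w\<in>Ln n. left_special A L w}"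

lemma fin_RSn: "finite (RSn n)" unfolding RSn_def using fin_Ln by simp
lemma fin_LSn: "finite (LSn n)" unfolding LSn_def using fin_Ln by simp

lemma RS_suf: "right_special A L (a # w) \<Longrightarrow> right_special A L w"
  unfolding right_special_def using card_mono[OF fin_Exr Exr_sub[of a w]] by linarith
lemma LS_pre: "left_special A L (w @ [b]) \<Longrightarrow> left_special A L w"
  unfolding left_special_def using card_mono[OF fin_Exl Exl_sub[of w b]] by linarith

lemma RSn_Suc: assumes "n \<ge> 1"
  shows "RSn (Suc n) = (\<lambda>(w,a). a # w) ` Sigma (RSn n) (\<lambda>w. {a\<in>Ex_l A L w. right_special A L (a # w)})"
  unfolding RSn_def Ln_Suc_l[OF assms] using RS_suf by auto

lemma LSn_Suc: assumes "n \<ge> 1"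
  shows "LSn (Suc n) = (\<lambda>(w,b). w @ [b]) ` Sigma (LSn n) (\<lambda>w. {b\<in>Ex_r A L w. left_special A L (w @ [b])})"
  unfolding LSn_def Ln_Suc_r[OF assms] using LS_pre by auto

lemma card_RSn_Suc: assumes "n \<ge> 1"
  shows "card (RSn (Suc n)) = (\<Sum>w\<in>RSn n. card {a\<in>Ex_l A L w. right_special A L (a # w)})"
  unfolding RSn_Suc[OF assms] by (subst card_image[OF inj_l]) (auto simp: fin_RSn fin_Exl)

lemma card_LSn_Suc: assumes "n \<ge> 1"
  shows "card (LSn (Suc n)) = (\<Sum>w\<in>LSn n. card {b\<in>Ex_r A L w. left_special A L (w @ [b])})"
  unfolding LSn_Suc[OF assms] by (subst card_image[OF inj_r]) (auto simp: fin_LSn fin_Exr)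

lemma RS_ext: assumes w: "w \<in> L" and m: "mm w = 0" and rs: "right_special A L w"
  shows "card {a\<in>Ex_l A L w. right_special A L (a # w)} \<ge> 1"
proof (rule ccontr)
  assume "\<not> ?thesis"
  moreover have fX: "finite {a\<in>Ex_l A L w. right_special A L (a # w)}" using fin_Exl[of w] by simp
  ultimately have "card {a\<in>Ex_l A L w. right_special A L (a # w)} = 0" by linarith
  then have "{a\<in>Ex_l A L w. right_special A L (a # w)} = {}" using fX by simp
  then have "\<forall>a\<in>Ex_l A L w. rr (a # w) \<le> 1" unfolding right_special_def by fastforce
  then have "ee w \<le> ll w" unfolding card_Exlr_l
    using sum_mono[of "Ex_l A L w" "\<lambda>a. rr (a # w)" "\<lambda>_. 1"] by simp
  then show False using m rs unfolding mm_def right_special_def by linarith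
qed

lemma LS_ext: assumes w: "w \<in> L" and m: "mm w = 0" and ls: "left_special A L w"
  shows "card {b\<in>Ex_r A L w. left_special A L (w @ [b])} \<ge> 1"
proof (rule ccontr)
  assume "\<not> ?thesis"
  moreover have fX: "finite {b\<in>Ex_r A L w. left_special A L (w @ [b])}" using fin_Exr[of w] by simp
  ultimately have "card {b\<in>Ex_r A L w. left_special A L (w @ [b])} = 0" by linarith
  then have "{b\<in>Ex_r A L w. left_special A L (w @ [b])} = {}" using fX by simp
  then have "\<forall>b\<in>Ex_r A L w. ll (w @ [b]) \<le> 1" unfolding left_special_def by fastforce
  then have "ee w \<le> rr w" unfolding card_Exlr_r
    using sum_mono[of "Ex_r A L w" "\<lambda>b. ll (w @ [b])" "\<lambda>_. 1"] by simp
  then show False using m ls unfolding mm_def left_special_def by linarith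
qed

lemma RSn_le: "int (card (RSn n)) \<le> sR n"
proof -
  have "int (card (RSn n)) = (\<Sum>w\<in>RSn n. (1::int))" by simp
  also have "\<dots> \<le> (\<Sum>w\<in>RSn n. int (rr w) - 1)"
    by (rule sum_mono) (auto simp: RSn_def right_special_def)
  also have "\<dots> \<le> (\<Sum>w\<in>Ln n. int (rr w) - 1)"
  proof (rule sum_mono2[OF fin_Ln])
    show "RSn n \<subseteq> Ln n" by (auto simp: RSn_def)
    fix b assume "b \<in> Ln n - RSn n"
    then have "b \<in> L" by (simp add: Ln_def)
    then show "0 \<le> int (rr b) - 1" using card_Exr_ge[of b] by linarith
  qed
  finally show ?thesis unfolding sR_def .
qed

lemma LSn_le: "int (card (LSn n)) \<le> sL n"
proof -
  have "int (card (LSn n)) = (\<Sum>w\<in>LSn n. (1::int))" by simp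
  also have "\<dots> \<le> (\<Sum>w\<in>LSn n. int (ll w) - 1)"
    by (rule sum_mono) (auto simp: LSn_def left_special_def)
  also have "\<dots> \<le> (\<Sum>w\<in>Ln n. int (ll w) - 1)"
  proof (rule sum_mono2[OF fin_Ln])
    show "LSn n \<subseteq> Ln n" by (auto simp: LSn_def)
    fix b assume "b \<in> Ln n - LSn n"
    then have "b \<in> L" by (simp add: Ln_def)
    then show "0 \<le> int (ll b) - 1" using card_Exl_ge[of b] by linarith
  qed
  finally show ?thesis unfolding sL_def .
qed

lemma sum_all1:
  fixes c :: "'b \<Rightarrow> nat"
  assumes "finite X" "\<forall>x\<in>X. c x \<ge> 1" "(\<Sum>x\<in>X. c x) \<le> card X" "x \<in> X"
  shows "c x = 1"
proof (rule ccontr)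
  assume "c x \<noteq> 1"
  then have "c x > 1" using assms by force
  then have "(\<Sum>x\<in>X. (1::nat)) < (\<Sum>x\<in>X. c x)"
    using assms by (intro sum_strict_mono_ex1) auto
  then show False using assms(3) by simp
qed

end



context lang begin

lemma RS_eventually:
  assumes N1: "N \<ge> 1" and H: "\<forall>n\<ge>N. sR (Suc n) = sR n \<and> (\<forall>w\<in>Ln n. mm w = 0)"
  shows "\<exists>M. \<forall>w\<in>L. length w \<ge> M \<longrightarrow> right_special A L w \<longrightarrow>
           card {a\<in>Ex_l A L w. right_special A L (a # w)} = 1"
proof -
  have c0: "sR (N + d) = sR N" for d
    by (induction d) (use H in auto)
  have const: "sR n = sR N" if "n \<ge> N" for n
    using c0[of "n - N"] that by simp
  have terms: "\<forall>w\<in>RSn n. card {a\<in>Ex_l A L w. right_special A L (a # w)} \<ge> 1" if "n \<ge> N" for n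
    using H that RS_ext by (auto simp: RSn_def Ln_def)
  have grow: "card (RSn n) \<le> card (RSn (Suc n))" if "n \<ge> N" for n
  proof -
    have "card (RSn n) = (\<Sum>w\<in>RSn n. (1::nat))" by simp
    also have "\<dots> \<le> (\<Sum>w\<in>RSn n. card {a\<in>Ex_l A L w. right_special A L (a # w)})"
      by (rule sum_mono) (use terms[OF that] in auto)
    also have "\<dots> = card (RSn (Suc n))" using card_RSn_Suc[of n] that N1 by simp
    finally show ?thesis .
  qed
  define f where "f n = sR N - int (card (RSn n))" for n
  have dec: "f (Suc n) \<le> f n" if "n \<ge> N" for n using grow[OF that] unfolding f_def by simp
  have nn: "0 \<le> f n" if "n \<ge> N" for n using RSn_le[of n] const[OF that] unfolding f_def by simp
  obtain M where M: "M \<ge> N" "\<forall>n\<ge>M. f n = f M" using ev_const[of N f, OF dec nn] by blast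
  have "card {a\<in>Ex_l A L w. right_special A L (a # w)} = 1"
    if w: "w \<in> L" "length w \<ge> M" "right_special A L w" for w
  proof -
    define n where "n = length w"
    have nM: "n \<ge> M" "n \<ge> N" "n \<ge> 1" using w M(1) N1 n_def by auto
    have "f (Suc n) = f n" using M(2)[rule_format, of n] M(2)[rule_format, of "Suc n"] nM by linarith
    then have eqc: "card (RSn (Suc n)) = card (RSn n)" unfolding f_def by simp
    show ?thesis
    proof (rule sum_all1[OF fin_RSn terms[OF nM(2)]])
      show "(\<Sum>w\<in>RSn n. card {a\<in>Ex_l A L w. right_special A L (a # w)}) \<le> card (RSn n)"
        using card_RSn_Suc[OF nM(3)] eqc by simp
      show "w \<in> RSn n" using w n_def by (simp add: RSn_def Ln_def)
    qed
  qed
  then show ?thesis by blast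
qed

lemma LS_eventually:
  assumes N1: "N \<ge> 1" and H: "\<forall>n\<ge>N. sL (Suc n) = sL n \<and> (\<forall>w\<in>Ln n. mm w = 0)"
  shows "\<exists>M. \<forall>w\<in>L. length w \<ge> M \<longrightarrow> left_special A L w \<longrightarrow>
           card {b\<in>Ex_r A L w. left_special A L (w @ [b])} = 1"
proof -
  have c0: "sL (N + d) = sL N" for d
    by (induction d) (use H in auto)
  have const: "sL n = sL N" if "n \<ge> N" for n
    using c0[of "n - N"] that by simp
  have terms: "\<forall>w\<in>LSn n. card {b\<in>Ex_r A L w. left_special A L (w @ [b])} \<ge> 1" if "n \<ge> N" for n
    using H that LS_ext by (auto simp: LSn_def Ln_def)
  have grow: "card (LSn n) \<le> card (LSn (Suc n))" if "n \<ge> N" for n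
  proof -
    have "card (LSn n) = (\<Sum>w\<in>LSn n. (1::nat))" by simp
    also have "\<dots> \<le> (\<Sum>w\<in>LSn n. card {b\<in>Ex_r A L w. left_special A L (w @ [b])})"
      by (rule sum_mono) (use terms[OF that] in auto)
    also have "\<dots> = card (LSn (Suc n))" using card_LSn_Suc[of n] that N1 by simp
    finally show ?thesis .
  qed
  define f where "f n = sL N - int (card (LSn n))" for n
  have dec: "f (Suc n) \<le> f n" if "n \<ge> N" for n using grow[OF that] unfolding f_def by simp
  have nn: "0 \<le> f n" if "n \<ge> N" for n using LSn_le[of n] const[OF that] unfolding f_def by simp
  obtain M where M: "M \<ge> N" "\<forall>n\<ge>M. f n = f M" using ev_const[of N f, OF dec nn] by blast
  have "card {b\<in>Ex_r A L w. left_special A L (w @ [b])} = 1"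
    if w: "w \<in> L" "length w \<ge> M" "left_special A L w" for w
  proof -
    define n where "n = length w"
    have nM: "n \<ge> M" "n \<ge> N" "n \<ge> 1" using w M(1) N1 n_def by auto
    have "f (Suc n) = f n" using M(2)[rule_format, of n] M(2)[rule_format, of "Suc n"] nM by linarith
    then have eqc: "card (LSn (Suc n)) = card (LSn n)" unfolding f_def by simp
    show ?thesis
    proof (rule sum_all1[OF fin_LSn terms[OF nM(2)]])
      show "(\<Sum>w\<in>LSn n. card {b\<in>Ex_r A L w. left_special A L (w @ [b])}) \<le> card (LSn n)"
        using card_LSn_Suc[OF nM(3)] eqc by simp
      show "w \<in> LSn n" using w n_def by (simp add: LSn_def Ln_def)
    qed
  qed
  then show ?thesis by blast
qed

lemma card1_ex1: assumes "card {x\<in>X. P x} = 1" shows "\<exists>!x. x \<in> X \<and> P x"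
proof -
  obtain y where "{x\<in>X. P x} = {y}" using assms by (rule card_1_singletonE)
  then show ?thesis by (metis (mono_tags, lifting) mem_Collect_eq singletonD singletonI)
qed

lemma dendric_imp_RBC: assumes "eventually_dendric A L" shows "RBC A L"
proof -
  obtain n0 where n0: "\<And>w. w \<in> L \<Longrightarrow> length w \<ge> n0 \<Longrightarrow> graph_tree (ext_vertices A L w) (ext_edge A L w)"
    using assms unfolding eventually_dendric_def by blast
  obtain N where N: "N \<ge> 1" "\<forall>n\<ge>N. sR (Suc n) = sR n \<and> sL (Suc n) = sL n \<and> (\<forall>w\<in>Ln n. mm w = 0)"
    using m_zero_eventually[of n0] n0 tree_mm by blast
  obtain M1 where M1: "\<forall>w\<in>L. length w \<ge> M1 \<longrightarrow> right_special A L w \<longrightarrow>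
           card {a\<in>Ex_l A L w. right_special A L (a # w)} = 1"
    using RS_eventually[OF N(1)] N(2) by blast
  obtain M2 where M2: "\<forall>w\<in>L. length w \<ge> M2 \<longrightarrow> left_special A L w \<longrightarrow>
           card {b\<in>Ex_r A L w. left_special A L (w @ [b])} = 1"
    using LS_eventually[OF N(1)] N(2) by blast
  have "regular_bispecial A L w" if "w \<in> L" "length w \<ge> max M1 M2" "bispecial A L w" for w
  proof -
    have "\<exists>!a. a \<in> Ex_l A L w \<and> right_special A L (a # w)"
      using M1 that by (intro card1_ex1) (auto simp: bispecial_def)
    moreover have "\<exists>!b. b \<in> Ex_r A L w \<and> left_special A L (w @ [b])"
      using M2 that by (intro card1_ex1) (auto simp: bispecial_def)
    ultimately show ?thesis using that(3) unfolding regular_bispecial_def by simp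
  qed
  then show ?thesis unfolding RBC_def by blast
qed

end

theorem mainTheorem4:
  fixes A :: "'a set" and L :: "'a list set"
  assumes "is_language A L" and "recurrent L"
  shows "eventually_dendric A L \<longleftrightarrow> RBC A L"
proof -
  interpret lang A L by (rule lang.intro) (rule assms(1))
  show ?thesis using RBC_imp_dendric dendric_imp_RBC by blast
qed



end
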